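(* For integers $1\le r\le t$, $$3rt + 2r + 2t +1 - \left\lfloor \frac{r}{2} \right\rfloor \le dim_s(C_{2r+1}\boxtimes C_{2t+1})\le 3rt + 2r + 2t +1.$$
   Context: $C_{m}$ is the cycle on $m$ vertices. For a connected graph $G$ with shortest-path distance $d_G$, a vertex $w$ strongly resolves $u,v$ if $d_G(w,u)=d_G(w,v)+d_G(v,u)$ or $d_G(w,v)=d_G(w,u)+d_G(u,v)$; $dim_s(G)$ is the minimum cardinality of a set $S\subseteq V(G)$ such that every pair of vertices is strongly resolved by some vertex of $S$. The strong product $G\boxtimes H$ has vertex set $V(G)\times V(H)$, with $(a,b)\sim(c,d)$ iff ($a=c$ and $bd\in E(H)$) or ($ac\in E(G)$ and $b=d$) or ($ac\in E(G)$ and $bd\in E(H)$). *)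

theory Defs
  imports Main
begin

record 'a graph =
  verts :: "'a set"
  adj :: "'a \<Rightarrow> 'a \<Rightarrow> bool"

fun walk :: "'a graph \<Rightarrow> nat \<Rightarrow> 'a \<Rightarrow> 'a \<Rightarrow> bool" where
  "walk G 0 u v \<longleftrightarrow> u = v \<and> u \<in> verts G"
| "walk G (Suc n) u v \<longleftrightarrow> (\<exists>w. u \<in> verts G \<and> w \<in> verts G \<and> adj G u w \<and> walk G n w v)"

text \<open>Shortest-path distance (meaningful for connected graphs).\<close>
definition gdist :: "'a graph \<Rightarrow> 'a \<Rightarrow> 'a \<Rightarrow> nat" where
  "gdist G u v = (LEAST n. walk G n u v)"

definition strongly_resolves :: "'a graph \<Rightarrow> 'a \<Rightarrow> 'a \<Rightarrow> 'a \<Rightarrow> bool" where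
  "strongly_resolves G w u v \<longleftrightarrow>
     gdist G w u = gdist G w v + gdist G v u \<or> gdist G w v = gdist G w u + gdist G u v"

definition strong_resolving_set :: "'a graph \<Rightarrow> 'a set \<Rightarrow> bool" where
  "strong_resolving_set G S \<longleftrightarrow> S \<subseteq> verts G \<and>
     (\<forall>u\<in>verts G. \<forall>v\<in>verts G. u \<noteq> v \<longrightarrow> (\<exists>w\<in>S. strongly_resolves G w u v))"

definition strong_metric_dim :: "'a graph \<Rightarrow> nat" where
  "strong_metric_dim G = (LEAST k. \<exists>S. strong_resolving_set G S \<and> finite S \<and> card S = k)"

definition cycle_graph :: "nat \<Rightarrow> nat graph" where
  "cycle_graph m = \<lparr> verts = {0..<m},
     adj = (\<lambda>i j. i < m \<and> j < m \<and> i \<noteq> j \<and> (j = (i + 1) mod m \<or> i = (j + 1) mod m)) \<rparr>"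

definition strong_product :: "'a graph \<Rightarrow> 'b graph \<Rightarrow> ('a \<times> 'b) graph" where
  "strong_product G H = \<lparr> verts = verts G \<times> verts H,
     adj = (\<lambda>(a,b) (c,d). (a = c \<and> adj H b d) \<or> (adj G a c \<and> b = d) \<or> (adj G a c \<and> adj H b d)) \<rparr>"

end

theory Submission
  imports Defs
begin

definition cd :: "nat \<Rightarrow> nat \<Rightarrow> nat \<Rightarrow> nat" where
  "cd m x y = min (if x \<le> y then y - x else x - y) (m - (if x \<le> y then y - x else x - y))"

lemma cd_int: "x < m \<Longrightarrow> y < m \<Longrightarrow> int (cd m x y) = min \<bar>int x - int y\<bar> (int m - \<bar>int x - int y\<bar>)"
  unfolding cd_def by (cases "x \<le> y") (auto simp: of_nat_diff min_def)

lemma cd_tri: "x < m \<Longrightarrow> y < m \<Longrightarrow> z < m \<Longrightarrow> cd m x z \<le> cd m x y + cd m y z"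
proof -
  assume h: "x < m" "y < m" "z < m"
  have "min \<bar>int x - int z\<bar> (int m - \<bar>int x - int z\<bar>) \<le>
        min \<bar>int x - int y\<bar> (int m - \<bar>int x - int y\<bar>) + min \<bar>int y - int z\<bar> (int m - \<bar>int y - int z\<bar>)"
    unfolding min_def using h by (simp split: if_splits abs_split)
  thus ?thesis using cd_int[of x m z] cd_int[of x m y] cd_int[of y m z] h by linarith
qed

lemma cd_le: "x < m \<Longrightarrow> y < m \<Longrightarrow> 2 * cd m x y \<le> m"
  using cd_int[of x m y] by (simp add: min_def split: if_splits)
lemma cd_sym: "cd m x y = cd m y x"
  unfolding cd_def by (cases "x \<le> y"; simp add: min_def split: if_splits)
lemma cd_0: "x < m \<Longrightarrow> y < m \<Longrightarrow> cd m x y = 0 \<longleftrightarrow> x = y"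
  using cd_int[of x m y] by (auto simp: min_def split: if_splits)

lemma cd_up: "x < m \<Longrightarrow> y < m \<Longrightarrow> (x<y \<and> 2*(y-x) \<le> m) \<or> (y<x \<and> 2*(x-y) > m) \<Longrightarrow>
   int (cd m (if x+1<m then x+1 else 0) y) = int (cd m x y) - 1"
proof (cases "x+1<m")
  case True
  assume h: "x < m" "y < m" "(x<y \<and> 2*(y-x) \<le> m) \<or> (y<x \<and> 2*(x-y) > m)"
  then show ?thesis using True cd_int[of x m y] cd_int[of "x+1" m y]
    by (auto simp: min_def of_nat_diff split: if_splits abs_split)
next
  case False
  assume h: "x < m" "y < m" "(x<y \<and> 2*(y-x) \<le> m) \<or> (y<x \<and> 2*(x-y) > m)"
  then show ?thesis using False cd_int[of x m y] cd_int[of "0" m y]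
    by (auto simp: min_def of_nat_diff split: if_splits abs_split)
qed

lemma cd_down: "x < m \<Longrightarrow> y < m \<Longrightarrow> (y<x \<and> 2*(x-y) \<le> m) \<or> (x<y \<and> 2*(y-x) > m) \<Longrightarrow>
   int (cd m (if x=0 then m-1 else x-1) y) = int (cd m x y) - 1"
proof (cases "x=0")
  case True
  assume h: "x < m" "y < m" "(y<x \<and> 2*(x-y) \<le> m) \<or> (x<y \<and> 2*(y-x) > m)"
  then show ?thesis using True cd_int[of x m y] cd_int[of "m-1" m y]
    by (auto simp: min_def of_nat_diff split: if_splits abs_split)
next
  case False
  assume h: "x < m" "y < m" "(y<x \<and> 2*(x-y) \<le> m) \<or> (x<y \<and> 2*(y-x) > m)"
  then show ?thesis using False cd_int[of x m y] cd_int[of "x-1" m y]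
    by (auto simp: min_def of_nat_diff split: if_splits abs_split)
qed

lemma cd_step_aux: "x < m \<Longrightarrow> y < m \<Longrightarrow> x \<noteq> y \<Longrightarrow>
   cd m (if x+1<m then x+1 else 0) y = cd m x y - 1 \<or> cd m (if x=0 then m-1 else x-1) y = cd m x y - 1"
proof -
  assume h: "x < m" "y < m" "x \<noteq> y"
  have p: "cd m x y > 0" using cd_int[of x m y] h by (auto simp: min_def split: if_splits)
  have "((x<y \<and> 2*(y-x) \<le> m) \<or> (y<x \<and> 2*(x-y) > m)) \<or> ((y<x \<and> 2*(x-y) \<le> m) \<or> (x<y \<and> 2*(y-x) > m))"
    using h by linarith
  thus ?thesis using cd_up[OF h(1,2)] cd_down[OF h(1,2)] p by linarith
qed

lemma cyc_adj: "adj (cycle_graph m) x z \<longleftrightarrow> x < m \<and> z < m \<and> x \<noteq> z \<and>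
   ((x+1<m \<and> z=x+1) \<or> (x+1=m \<and> z=0) \<or> (z+1<m \<and> x = z+1) \<or> (z+1=m \<and> x=0))"
proof -
  have a: "x < m \<Longrightarrow> (x+1) mod m = (if x+1<m then x+1 else 0)" for x
  proof (cases "x+1<m")
    case False
    assume "x < m"
    hence "x+1 = m" using False by linarith
    thus ?thesis by simp
  qed simp
  have e: "adj (cycle_graph m) x z \<longleftrightarrow> x<m \<and> z<m \<and> x\<noteq>z \<and> (z = (x+1) mod m \<or> x = (z+1) mod m)"
    by (simp add: cycle_graph_def)
  show ?thesis
  proof (cases "x<m \<and> z<m")
    case True
    have e1: "(x+1) mod m = (if x+1<m then x+1 else 0)" "(z+1) mod m = (if z+1<m then z+1 else 0)"
      using a True by auto
    show ?thesis unfolding e e1 by auto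
  next
    case False
    then show ?thesis unfolding e by auto
  qed
qed

lemma cd_adj1: "adj (cycle_graph m) x z \<Longrightarrow> cd m x z \<le> 1"
  unfolding cyc_adj using cd_int[of x m z] by (auto simp: min_def split: if_splits)

lemma cd_near: "x < m \<Longrightarrow> y < m \<Longrightarrow> z < m \<Longrightarrow> cd m x z \<le> 1 \<Longrightarrow> cd m x y \<le> cd m z y + 1"
  using cd_tri[of x m z y] by linarith

lemma cstep: "3 \<le> m \<Longrightarrow> x < m \<Longrightarrow> y < m \<Longrightarrow>
   \<exists>z. z < m \<and> (if x = y then z = x else adj (cycle_graph m) x z) \<and> cd m z y = cd m x y - 1"
proof (cases "x = y")
  case True
  assume "x < m" "y < m"
  then show ?thesis using True cd_0[of y m y] by auto
next
  case False
  assume h: "3 \<le> m" "x < m" "y < m"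
  define z1 where "z1 = (if x+1<m then x+1 else 0)"
  define z2 where "z2 = (if x=0 then m-1 else x-1)"
  have a1: "adj (cycle_graph m) x z1" unfolding cyc_adj z1_def using h by auto
  have a2: "adj (cycle_graph m) x z2" unfolding cyc_adj z2_def using h by auto
  have "z1 < m" "z2 < m" using a1 a2 unfolding cyc_adj by auto
  then show ?thesis using cd_step_aux[OF h(2,3) False] a1 a2 False unfolding z1_def[symmetric] z2_def[symmetric]
    by auto
qed


abbreviation PG :: "nat \<Rightarrow> nat \<Rightarrow> (nat \<times> nat) graph" where
  "PG m n \<equiv> strong_product (cycle_graph m) (cycle_graph n)"

definition DD :: "nat \<Rightarrow> nat \<Rightarrow> nat \<times> nat \<Rightarrow> nat \<times> nat \<Rightarrow> nat" where
  "DD m n u v = max (cd m (fst u) (fst v)) (cd n (snd u) (snd v))"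

lemma verts_PG: "verts (PG m n) = {0..<m} \<times> {0..<n}"
  by (simp add: strong_product_def cycle_graph_def)

lemma adj_PG: "adj (PG m n) (a,b) (c,d) \<longleftrightarrow> (a = c \<and> adj (cycle_graph n) b d) \<or>
   (adj (cycle_graph m) a c \<and> b = d) \<or> (adj (cycle_graph m) a c \<and> adj (cycle_graph n) b d)"
  by (simp add: strong_product_def)

lemma adj_PG_cd: "adj (PG m n) (a,b) (c,d) \<Longrightarrow> a < m \<Longrightarrow> b < n \<Longrightarrow> cd m a c \<le> 1 \<and> cd n b d \<le> 1"
  unfolding adj_PG using cd_adj1[of m a c] cd_adj1[of n b d] cd_0[of a m a] cd_0[of b n b] by auto

lemma adj_PG_verts: "adj (PG m n) (a,b) (c,d) \<Longrightarrow> a < m \<Longrightarrow> b < n \<Longrightarrow> c < m \<and> d < n"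
  unfolding adj_PG cyc_adj by auto

lemma DD_tri: "u \<in> verts (PG m n) \<Longrightarrow> v \<in> verts (PG m n) \<Longrightarrow> w \<in> verts (PG m n) \<Longrightarrow>
  DD m n u w \<le> DD m n u v + DD m n v w"
  unfolding DD_def verts_PG
  using cd_tri[of "fst u" m "fst v" "fst w"] cd_tri[of "snd u" n "snd v" "snd w"]
  by (auto simp: max_def)

lemma DD_sym: "DD m n u v = DD m n v u"
  unfolding DD_def using cd_sym by metis

lemma DD_0: "u \<in> verts (PG m n) \<Longrightarrow> v \<in> verts (PG m n) \<Longrightarrow> DD m n u v = 0 \<longleftrightarrow> u = v"
  unfolding DD_def verts_PG using cd_0[of "fst u" m "fst v"] cd_0[of "snd u" n "snd v"]
  by (cases u; cases v) auto

lemma DD_adj: "u \<in> verts (PG m n) \<Longrightarrow> v \<in> verts (PG m n) \<Longrightarrow> adj (PG m n) u w \<Longrightarrow>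
   w \<in> verts (PG m n) \<and> DD m n u v \<le> DD m n w v + 1"
proof -
  assume h: "u \<in> verts (PG m n)" "v \<in> verts (PG m n)" "adj (PG m n) u w"
  obtain a b where u: "u = (a,b)" by (cases u)
  obtain c d where w: "w = (c,d)" by (cases w)
  have ab: "a < m" "b < n" using h(1) u verts_PG by auto
  have cdv: "c < m" "d < n" using adj_PG_verts h(3) ab u w by auto
  have n1: "cd m a c \<le> 1" "cd n b d \<le> 1" using adj_PG_cd h(3) ab u w by auto
  have "fst v < m" "snd v < n" using h(2) verts_PG by auto
  then have "cd m a (fst v) \<le> cd m c (fst v) + 1" "cd n b (snd v) \<le> cd n d (snd v) + 1"
    using cd_near n1 ab cdv by auto
  thus ?thesis using u w cdv unfolding DD_def verts_PG by auto
qed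

lemma walk_DD: "walk (PG m n) k u v \<Longrightarrow> u \<in> verts (PG m n) \<and> v \<in> verts (PG m n) \<and> DD m n u v \<le> k"
proof (induction k arbitrary: u)
  case 0
  then show ?case using DD_0[of u m n u] by auto
next
  case (Suc k)
  then obtain w where w: "u \<in> verts (PG m n)" "w \<in> verts (PG m n)" "adj (PG m n) u w" "walk (PG m n) k w v"
    by auto
  from Suc.IH[OF w(4)] have "v \<in> verts (PG m n)" "DD m n w v \<le> k" by auto
  with DD_adj[OF w(1) this(1) w(3)] w show ?case by auto
qed

lemma step_PG: "3 \<le> m \<Longrightarrow> 3 \<le> n \<Longrightarrow> u \<in> verts (PG m n) \<Longrightarrow> v \<in> verts (PG m n) \<Longrightarrow> u \<noteq> v \<Longrightarrow>
  \<exists>u'. u' \<in> verts (PG m n) \<and> adj (PG m n) u u' \<and> DD m n u' v = DD m n u v - 1"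
proof -
  assume h: "3 \<le> m" "3 \<le> n" "u \<in> verts (PG m n)" "v \<in> verts (PG m n)" "u \<noteq> v"
  obtain a b where u: "u = (a,b)" by (cases u)
  obtain c d where v: "v = (c,d)" by (cases v)
  have l: "a < m" "b < n" "c < m" "d < n" using h u v verts_PG by auto
  obtain a' where a': "a' < m" "if a = c then a' = a else adj (cycle_graph m) a a'" "cd m a' c = cd m a c - 1"
    using cstep[OF h(1) l(1) l(3)] by blast
  obtain b' where b': "b' < n" "if b = d then b' = b else adj (cycle_graph n) b b'" "cd n b' d = cd n b d - 1"
    using cstep[OF h(2) l(2) l(4)] by blast
  have "adj (PG m n) (a,b) (a',b')"
    unfolding adj_PG using a'(2) b'(2) h(5) u v by (auto split: if_splits)
  moreover have "DD m n (a',b') v = DD m n u v - 1" using a'(3) b'(3) u v unfolding DD_def by auto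
  moreover have "(a',b') \<in> verts (PG m n)" using a' b' verts_PG by auto
  ultimately show ?thesis using u by blast
qed

lemma walk_ex: "3 \<le> m \<Longrightarrow> 3 \<le> n \<Longrightarrow> v \<in> verts (PG m n) \<Longrightarrow>
   \<forall>u. u \<in> verts (PG m n) \<longrightarrow> DD m n u v = k \<longrightarrow> walk (PG m n) k u v"
proof (induction k)
  case 0
  then show ?case using DD_0 by auto
next
  case (Suc k)
  show ?case
  proof (intro allI impI)
    fix u assume u: "u \<in> verts (PG m n)" "DD m n u v = Suc k"
    hence "u \<noteq> v" using DD_0[OF Suc.prems(3) Suc.prems(3)] by auto
    then obtain u' where "u' \<in> verts (PG m n)" "adj (PG m n) u u'" "DD m n u' v = DD m n u v - 1"
      using step_PG Suc.prems u by blast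
    moreover have "DD m n u' v = k" using calculation(3) u(2) by simp
    moreover have "walk (PG m n) k u' v" using Suc.IH Suc.prems calculation(1,4) by blast
    ultimately show "walk (PG m n) (Suc k) u v" unfolding walk.simps(2) using u(1) by blast
  qed
qed

lemma gdist_PG: "3 \<le> m \<Longrightarrow> 3 \<le> n \<Longrightarrow> u \<in> verts (PG m n) \<Longrightarrow> v \<in> verts (PG m n) \<Longrightarrow>
   gdist (PG m n) u v = DD m n u v"
  unfolding gdist_def
  by (rule Least_equality) (use walk_ex walk_DD in blast)+


lemma half_card:
  assumes k: "1 \<le> k" and X: "X \<subseteq> {..<2*k+1}"
    and nd: "\<forall>x\<in>X. \<forall>y\<in>X. x \<noteq> y \<longrightarrow> cd (2*k+1) x y \<noteq> k"
  shows "card X \<le> k"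
proof -
  define f where "f x = (if x \<le> k then x + k else x - k - 1)" for x
  have fcd: "x < 2*k+1 \<Longrightarrow> cd (2*k+1) x (f x) = k" for x
    using cd_int[of x "2*k+1" "f x"] unfolding f_def
    by (cases "x \<le> k") (auto simp: min_def of_nat_diff split: if_splits)
  have fin: "f x < 2*k+1" if "x < 2*k+1" for x using that unfolding f_def by auto
  have inj: "inj_on f {..<2*k+1}" unfolding inj_on_def f_def by auto
  have disj: "X \<inter> f ` X = {}"
  proof (rule ccontr)
    assume "X \<inter> f ` X \<noteq> {}"
    then obtain y where y: "y \<in> X" "f y \<in> X" by auto
    have "y < 2*k+1" using y X by auto
    hence "cd (2*k+1) y (f y) = k" by (rule fcd)
    moreover have "y \<noteq> f y" using calculation cd_0[of y "2*k+1" y] k \<open>y < 2*k+1\<close> by auto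
    ultimately show False using nd y by auto
  qed
  have finX: "finite X" using X finite_subset by blast
  have "card X + card (f ` X) = card (X \<union> f ` X)"
    using card_Un_disjoint[OF finX finite_imageI[OF finX] disj] by simp
  also have "\<dots> \<le> card {..<2*k+1}"
    by (rule card_mono) (use X fin in auto)
  finally have "card X + card (f ` X) \<le> 2*k+1" by simp
  moreover have "card (f ` X) = card X" using card_image inj_on_subset[OF inj X] by blast
  ultimately show ?thesis by linarith
qed

lemma mmd_max:
  assumes rt: "1 \<le> r" "r \<le> t"
    and uv: "u \<in> verts (PG (2*r+1) (2*t+1))" "v \<in> verts (PG (2*r+1) (2*t+1))"
    and C: "cd (2*t+1) (snd u) (snd v) = t \<or> (cd (2*r+1) (fst u) (fst v) = r \<and> cd (2*t+1) (snd u) (snd v) < r)"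
    and a: "adj (PG (2*r+1) (2*t+1)) v v'"
  shows "DD (2*r+1) (2*t+1) v' u \<le> DD (2*r+1) (2*t+1) v u"
proof -
  obtain a b where u: "u = (a,b)" by (cases u)
  obtain c d where v: "v = (c,d)" by (cases v)
  obtain c' d' where v': "v' = (c',d')" by (cases v')
  have l: "a < 2*r+1" "b < 2*t+1" "c < 2*r+1" "d < 2*t+1" using uv u v verts_PG by auto
  have l': "c' < 2*r+1" "d' < 2*t+1" using adj_PG_verts a v v' l by auto
  have n1: "cd (2*r+1) c c' \<le> 1" "cd (2*t+1) d d' \<le> 1" using adj_PG_cd a v v' l by auto
  have b1: "2 * cd (2*r+1) c' a \<le> 2*r+1" "2 * cd (2*t+1) d' b \<le> 2*t+1"
    using cd_le l l' by auto
  have nr: "cd (2*t+1) d' b \<le> cd (2*t+1) d b + 1"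
    using cd_near[of d' "2*t+1" b d] n1 cd_sym[of "2*t+1" d d'] l l' by auto
  have C': "cd (2*t+1) d b = t \<or> (cd (2*r+1) c a = r \<and> cd (2*t+1) d b < r)"
    using C cd_sym[of "2*t+1" b d] cd_sym[of "2*r+1" a c] unfolding u v by simp
  have e1: "DD (2*r+1) (2*t+1) v' u = max (cd (2*r+1) c' a) (cd (2*t+1) d' b)" by (simp add: DD_def v' u)
  have e2: "DD (2*r+1) (2*t+1) v u = max (cd (2*r+1) c a) (cd (2*t+1) d b)" by (simp add: DD_def v u)
  have x1: "cd (2*r+1) c' a \<le> r" "cd (2*t+1) d' b \<le> t" using b1 by linarith+
  from C' show ?thesis
  proof
    assume "cd (2*t+1) d b = t"
    thus ?thesis unfolding e1 e2 using x1 rt by (intro max.boundedI) (simp_all add: le_max_iff_disj)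
  next
    assume h: "cd (2*r+1) c a = r \<and> cd (2*t+1) d b < r"
    thus ?thesis unfolding e1 e2 using x1 nr by (intro max.boundedI) (simp_all add: le_max_iff_disj)
  qed
qed

lemma no_resolve:
  assumes mn: "3 \<le> m" "3 \<le> n"
    and V: "w \<in> verts (PG m n)" "u \<in> verts (PG m n)" "v \<in> verts (PG m n)"
    and wv: "w \<noteq> v"
    and eq: "DD m n w u = DD m n w v + DD m n v u"
    and mx: "\<And>v'. adj (PG m n) v v' \<Longrightarrow> DD m n v' u \<le> DD m n v u"
  shows False
proof -
  obtain v' where v': "v' \<in> verts (PG m n)" "adj (PG m n) v v'" "DD m n v' w = DD m n v w - 1"
    using step_PG[OF mn V(3) V(1)] wv by metis
  have pos: "DD m n v w \<ge> 1" using DD_0[OF V(3) V(1)] wv by auto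
  have "DD m n w u \<le> DD m n w v' + DD m n v' u" by (rule DD_tri[OF V(1) v'(1) V(2)])
  moreover have "DD m n w v' = DD m n v w - 1" using v'(3) DD_sym by metis
  moreover have "DD m n w v = DD m n v w" using DD_sym by metis
  ultimately have "DD m n v' u \<ge> DD m n v u + 1" using eq pos by linarith
  with mx[OF v'(2)] show False by linarith
qed


lemma lower_card:
  assumes rt: "1 \<le> r" "r \<le> t"
    and S: "strong_resolving_set (PG (2*r+1) (2*t+1)) S"
  shows "card (verts (PG (2*r+1) (2*t+1)) - S) \<le> r * t"
proof -
  let ?m = "2*r+1" and ?n = "2*t+1"
  let ?P = "PG ?m ?n"
  define I where "I = verts ?P - S"
  have mn: "3 \<le> ?m" "3 \<le> ?n" using rt by auto
  have SV: "S \<subseteq> verts ?P" using S unfolding strong_resolving_set_def by auto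
  have indep: "\<not> (cd ?n (snd u) (snd v) = t \<or> (cd ?m (fst u) (fst v) = r \<and> cd ?n (snd u) (snd v) < r))"
    if uv: "u \<in> I" "v \<in> I" "u \<noteq> v" for u v
  proof
    assume C: "cd ?n (snd u) (snd v) = t \<or> (cd ?m (fst u) (fst v) = r \<and> cd ?n (snd u) (snd v) < r)"
    have C': "cd ?n (snd v) (snd u) = t \<or> (cd ?m (fst v) (fst u) = r \<and> cd ?n (snd v) (snd u) < r)"
      using C cd_sym[of ?n "snd u" "snd v"] cd_sym[of ?m "fst u" "fst v"] by simp
    have V: "u \<in> verts ?P" "v \<in> verts ?P" using uv I_def by auto
    obtain w where w: "w \<in> S" "strongly_resolves ?P w u v"
      using S uv V unfolding strong_resolving_set_def by blast
    have wV: "w \<in> verts ?P" using w SV by auto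
    have wu: "w \<noteq> u" "w \<noteq> v" using w uv I_def by auto
    have g: "gdist ?P x y = DD ?m ?n x y" if "x \<in> verts ?P" "y \<in> verts ?P" for x y
      using gdist_PG[OF mn that] .
    from w(2) have "DD ?m ?n w u = DD ?m ?n w v + DD ?m ?n v u \<or> DD ?m ?n w v = DD ?m ?n w u + DD ?m ?n u v"
      unfolding strongly_resolves_def using g V wV by simp
    then show False
    proof
      assume e: "DD ?m ?n w u = DD ?m ?n w v + DD ?m ?n v u"
      show False
        by (rule no_resolve[OF mn wV V(1) V(2) wu(2) e]) (rule mmd_max[OF rt V C])
    next
      assume e: "DD ?m ?n w v = DD ?m ?n w u + DD ?m ?n u v"
      show False
        by (rule no_resolve[OF mn wV V(2) V(1) wu(1) e]) (rule mmd_max[OF rt V(2) V(1) C'])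
    qed
  qed
  have finV: "finite (verts ?P)" by (simp add: verts_PG)
  have finI: "finite I" using finV I_def by auto
  define B where "B = snd ` I"
  define F where "F b = {a. (a,b) \<in> I}" for b
  have IV: "I \<subseteq> {0..<?m} \<times> {0..<?n}" using I_def verts_PG by auto
  have cF: "card (F b) \<le> r" for b
  proof (rule half_card)
    show "1 \<le> r" using rt by simp
    show "F b \<subseteq> {..<?m}" using IV F_def by auto
    show "\<forall>x\<in>F b. \<forall>y\<in>F b. x \<noteq> y \<longrightarrow> cd ?m x y \<noteq> r"
    proof (intro ballI impI)
      fix x y assume xy: "x \<in> F b" "y \<in> F b" "x \<noteq> y"
      have "b < ?n" using xy IV F_def by auto
      hence "cd ?n b b = 0" using cd_0 by auto
      thus "cd ?m x y \<noteq> r" using indep[of "(x,b)" "(y,b)"] xy F_def rt by auto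
    qed
  qed
  have cB: "card B \<le> t"
  proof (rule half_card)
    show "1 \<le> t" using rt by simp
    show "B \<subseteq> {..<?n}" using IV B_def by auto
    show "\<forall>x\<in>B. \<forall>y\<in>B. x \<noteq> y \<longrightarrow> cd ?n x y \<noteq> t"
    proof (intro ballI impI)
      fix x y assume xy: "x \<in> B" "y \<in> B" "x \<noteq> y"
      then obtain p q where "(p,x) \<in> I" "(q,y) \<in> I" unfolding B_def by force
      thus "cd ?n x y \<noteq> t" using indep[of "(p,x)" "(q,y)"] xy by auto
    qed
  qed
  have finB: "finite B" using finI B_def by auto
  have "I \<subseteq> (\<Union>b\<in>B. F b \<times> {b})"
  proof
    fix p assume p: "p \<in> I"
    obtain a b where ab: "p = (a,b)" by (cases p)
    have "b \<in> B" unfolding B_def using p ab by force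
    moreover have "a \<in> F b" unfolding F_def using p ab by simp
    ultimately show "p \<in> (\<Union>b\<in>B. F b \<times> {b})" using ab by blast
  qed
  hence "card I \<le> card (\<Union>b\<in>B. F b \<times> {b})"
  proof (rule card_mono[rotated])
    have "F b \<subseteq> {..<?m}" for b using IV F_def by auto
    hence "finite (F b)" for b using finite_subset by blast
    thus "finite (\<Union>b\<in>B. F b \<times> {b})" using finB by blast
  qed
  also have "\<dots> \<le> (\<Sum>b\<in>B. card (F b \<times> {b}))" by (rule card_UN_le[OF finB])
  also have "\<dots> \<le> (\<Sum>b\<in>B. r)" by (rule sum_mono) (simp add: card_cartesian_product cF)
  also have "\<dots> = card B * r" by simp
  also have "\<dots> \<le> t * r" using cB by simp
  finally show ?thesis unfolding I_def by (simp add: mult.commute)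
qed


lemma cd_top: "x < k \<Longrightarrow> cd (2*k+1) (2*k) x = x+1"
  using cd_int[of "2*k" "2*k+1" x] by (simp add: min_def split: if_splits)
lemma cd_small: "x < k \<Longrightarrow> y < k \<Longrightarrow> cd (2*k+1) x y = (if x \<le> y then y - x else x - y)"
proof -
  assume h: "x < k" "y < k"
  have "int (cd (2*k+1) x y) = \<bar>int x - int y\<bar>"
    using cd_int[of x "2*k+1" y] h by (simp add: min_def split: abs_split)
  note e = this
  show ?thesis
  proof (cases "x \<le> y")
    case True
    hence "int (cd (2*k+1) x y) = int (y - x)" using e by (simp add: of_nat_diff)
    thus ?thesis using True by (simp only: of_nat_eq_iff if_True)
  next
    case False
    hence "int (cd (2*k+1) x y) = int (x - y)" using e by (simp add: of_nat_diff)
    thus ?thesis using False by (simp only: of_nat_eq_iff if_False)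
  qed
qed

lemma resolve_I0:
  assumes rt: "1 \<le> r" "r \<le> t"
    and u: "u \<in> {0..<r} \<times> {0..<t}" and v: "v \<in> {0..<r} \<times> {0..<t}" and uv: "u \<noteq> v"
  shows "\<exists>w \<in> verts (PG (2*r+1) (2*t+1)) - {0..<r} \<times> {0..<t}. strongly_resolves (PG (2*r+1) (2*t+1)) w u v"
proof -
  let ?m = "2*r+1" and ?n = "2*t+1"
  let ?P = "PG ?m ?n"
  have mn: "3 \<le> ?m" "3 \<le> ?n" using rt by auto
  obtain a b where ab: "u = (a,b)" by (cases u)
  obtain c d where cdd: "v = (c,d)" by (cases v)
  have l: "a < r" "b < t" "c < r" "d < t" using u v ab cdd by auto
  have uV: "u \<in> verts ?P" and vV: "v \<in> verts ?P" using l ab cdd verts_PG rt by auto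
  have g: "gdist ?P x y = DD ?m ?n x y" if "x \<in> verts ?P" "y \<in> verts ?P" for x y
    using gdist_PG[OF mn that] .
  have sr: "strongly_resolves ?P w u v \<longleftrightarrow> DD ?m ?n w u = DD ?m ?n w v + DD ?m ?n v u \<or> DD ?m ?n w v = DD ?m ?n w u + DD ?m ?n u v"
    if "w \<in> verts ?P" for w
    unfolding strongly_resolves_def using g that uV vV by simp
  have cx: "cd ?m a c = (if a \<le> c then c - a else a - c)" "cd ?m c a = (if c \<le> a then a - c else c - a)"
    using cd_small l by auto
  have cy: "cd ?n b d = (if b \<le> d then d - b else b - d)" "cd ?n d b = (if d \<le> b then b - d else d - b)"
    using cd_small l rt by auto
  have z: "cd ?m a a = 0" "cd ?m c c = 0" "cd ?n b b = 0" "cd ?n d d = 0"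
    using cd_0 l rt by auto
  have tops: "cd ?m (2*r) a = a+1" "cd ?m (2*r) c = c+1" "cd ?n (2*t) b = b+1" "cd ?n (2*t) d = d+1"
    using cd_top l by auto
  have cases: "(cd ?n b d \<le> cd ?m a c \<and> a \<le> c) \<or> (cd ?n b d \<le> cd ?m a c \<and> c < a) \<or>
     (cd ?m a c \<le> cd ?n b d \<and> b \<le> d) \<or> (cd ?m a c \<le> cd ?n b d \<and> d < b)" by linarith
  then show ?thesis
  proof (elim disjE)
    assume h0: "cd ?n b d \<le> cd ?m a c \<and> a \<le> c"
    note h = h0[unfolded cx cy]
    let ?w = "(2*r, b)"
    have wV: "?w \<in> verts ?P - {0..<r} \<times> {0..<t}" using verts_PG l by auto
    have "DD ?m ?n ?w v = DD ?m ?n ?w u + DD ?m ?n u v"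
      unfolding DD_def ab cdd fst_conv snd_conv cx cy z tops using h l by (auto simp: max_def split: if_splits)
    thus ?thesis using sr wV by blast
  next
    assume h0: "cd ?n b d \<le> cd ?m a c \<and> c < a"
    note h = h0[unfolded cx cy]
    let ?w = "(2*r, d)"
    have wV: "?w \<in> verts ?P - {0..<r} \<times> {0..<t}" using verts_PG l by auto
    have "DD ?m ?n ?w u = DD ?m ?n ?w v + DD ?m ?n v u"
      unfolding DD_def ab cdd fst_conv snd_conv cx cy z tops using h l by (auto simp: max_def split: if_splits)
    thus ?thesis using sr wV by blast
  next
    assume h0: "cd ?m a c \<le> cd ?n b d \<and> b \<le> d"
    note h = h0[unfolded cx cy]
    let ?w = "(a, 2*t)"
    have wV: "?w \<in> verts ?P - {0..<r} \<times> {0..<t}" using verts_PG l rt by auto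
    have "DD ?m ?n ?w v = DD ?m ?n ?w u + DD ?m ?n u v"
      unfolding DD_def ab cdd fst_conv snd_conv cx cy z tops using h l by (auto simp: max_def split: if_splits)
    thus ?thesis using sr wV by blast
  next
    assume h0: "cd ?m a c \<le> cd ?n b d \<and> d < b"
    note h = h0[unfolded cx cy]
    let ?w = "(c, 2*t)"
    have wV: "?w \<in> verts ?P - {0..<r} \<times> {0..<t}" using verts_PG l rt by auto
    have "DD ?m ?n ?w u = DD ?m ?n ?w v + DD ?m ?n v u"
      unfolding DD_def ab cdd fst_conv snd_conv cx cy z tops using h l by (auto simp: max_def split: if_splits)
    thus ?thesis using sr wV by blast
  qed
qed


theorem theorem20:
  fixes r t :: nat
  assumes "1 \<le> r" and "r \<le> t"
  shows "3*r*t + 2*r + 2*t + 1 - r div 2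
           \<le> strong_metric_dim (strong_product (cycle_graph (2*r+1)) (cycle_graph (2*t+1)))
       \<and> strong_metric_dim (strong_product (cycle_graph (2*r+1)) (cycle_graph (2*t+1)))
           \<le> 3*r*t + 2*r + 2*t + 1"
proof -
  note rt = assms
  let ?m = "2*r+1" and ?n = "2*t+1"
  let ?P = "PG ?m ?n"
  let ?I = "{0..<r} \<times> {0..<t}"
  define S0 where "S0 = verts ?P - ?I"
  have mn: "3 \<le> ?m" "3 \<le> ?n" using rt by auto
  have g0: "gdist ?P u u = 0" if "u \<in> verts ?P" for u
    using gdist_PG[OF mn that that] DD_0[OF that that] by simp
  have srs: "strong_resolving_set ?P S0"
    unfolding strong_resolving_set_def
  proof (intro conjI ballI impI)
    show "S0 \<subseteq> verts ?P" unfolding S0_def by auto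
    fix u v assume uv: "u \<in> verts ?P" "v \<in> verts ?P" "u \<noteq> v"
    show "\<exists>w\<in>S0. strongly_resolves ?P w u v"
    proof (cases "u \<in> S0")
      case True
      have "strongly_resolves ?P u u v" unfolding strongly_resolves_def using g0[OF uv(1)] by simp
      then show ?thesis using True by blast
    next
      case False
      show ?thesis
      proof (cases "v \<in> S0")
        case True
        have "strongly_resolves ?P v u v" unfolding strongly_resolves_def using g0[OF uv(2)] by simp
        then show ?thesis using True by blast
      next
        case False
        then have "u \<in> ?I" "v \<in> ?I" using \<open>u \<notin> S0\<close> uv S0_def by auto
        then show ?thesis using resolve_I0[OF rt] uv(3) unfolding S0_def by blast
      qed
    qed
  qed
  have IV: "?I \<subseteq> verts ?P" using rt verts_PG by auto
  have finV: "finite (verts ?P)" by (simp add: verts_PG)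
  have cV: "card (verts ?P) = 4*r*t + 2*r + 2*t + 1"
    by (simp add: verts_PG card_cartesian_product algebra_simps)
  have cI: "card ?I = r * t" by (simp add: card_cartesian_product)
  have cS0: "card S0 = 3*r*t + 2*r + 2*t + 1"
    unfolding S0_def using card_Diff_subset[OF finite_subset[OF IV finV] IV] cV cI by simp
  have finS0: "finite S0" unfolding S0_def using finV by simp
  have ex: "\<exists>S. strong_resolving_set ?P S \<and> finite S \<and> card S = card S0"
    using srs finS0 by blast
  have up: "strong_metric_dim ?P \<le> 3*r*t + 2*r + 2*t + 1"
    unfolding strong_metric_dim_def using Least_le[of "\<lambda>k. \<exists>S. strong_resolving_set ?P S \<and> finite S \<and> card S = k" "card S0", OF ex] cS0 by simp
  obtain S1 where S1: "strong_resolving_set ?P S1" "finite S1" "card S1 = strong_metric_dim ?P"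
    unfolding strong_metric_dim_def using LeastI_ex[of "\<lambda>k. \<exists>S. strong_resolving_set ?P S \<and> finite S \<and> card S = k"] ex
    by blast
  have S1V: "S1 \<subseteq> verts ?P" using S1(1) unfolding strong_resolving_set_def by auto
  have "card (verts ?P - S1) \<le> r * t" by (rule lower_card[OF rt S1(1)])
  moreover have "card (verts ?P - S1) = card (verts ?P) - card S1"
    by (rule card_Diff_subset[OF S1(2) S1V])
  moreover have "card S1 \<le> card (verts ?P)" using card_mono[OF finV S1V] .
  ultimately have "3*r*t + 2*r + 2*t + 1 \<le> strong_metric_dim ?P" using cV S1(3) by simp
  then show ?thesis using up by simp
qed

end
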